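(* Let $(Y,u)$ and $(Y',u')$ be non-empty ultrametric spaces and let $f:Y\to Y'$ be immediate. If $(Y,u)$ is spherically complete, then $f$ is surjective and $(Y',u')$ is spherically complete. Moreover, for every $y\in Y$ and every ball $B'$ in $Y'$ containing $fy$, there is a ball $B$ in $Y$ containing $y$ such that $f(B)=B'$.
   Context: An ultrametric space $(Y,u)$ is a set $Y$ with a map $u$ from $Y\times Y$ onto a totally ordered set $\Gamma$ with last element $\infty$ such that for all $x,y,z\in Y$: $u(y,z)=\infty$ iff $y=z$; $u(y,z)\ge\min\{u(y,x),u(x,z)\}$; $u(y,z)=u(z,y)$. For $y\in Y$ and $\alpha\in\Gamma$, $B_\alpha(y)=\{z\in Y: u(y,z)\ge\alpha\}$ (closed ball), and $B(x,y):=B_{u(x,y)}(x)$. A ball is a union of a non-empty collection of closed balls which contain a common element. A nest of balls is a set of balls totally ordered by inclusion; $(Y,u)$ is spherically complete if every nest of balls has non-empty intersection. We write $fy$ for $f(y)$. An element $z'\in Y'$ is an attractor for $f$ if for every $y\in Y$ with $z'\ne fy$ there is $z\in Y$ with $u'(fz,z')>u'(fy,z')$ and $f(B(y,z))\subseteq B(fy,z')$. The map $f$ is immediate if every $z'\in Y'$ is an attractor for $f$. *)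

theory Defs
  imports Main
begin

text \<open>An ultrametric space is a carrier set Y with a map u into a linear order whose
  value set Gamma = u(Y x Y) has last element infinity; we take infinity to be top.\<close>

definition Gamma :: "'a set \<Rightarrow> ('a \<Rightarrow> 'a \<Rightarrow> 'g) \<Rightarrow> 'g set" where
  "Gamma Y u = {u x y | x y. x \<in> Y \<and> y \<in> Y}"

definition ultrametric :: "'a set \<Rightarrow> ('a \<Rightarrow> 'a \<Rightarrow> 'g::{linorder,order_top}) \<Rightarrow> bool" where
  "ultrametric Y u \<longleftrightarrow>
     (\<forall>y\<in>Y. \<forall>z\<in>Y. u y z = top \<longleftrightarrow> y = z) \<and>
     (\<forall>x\<in>Y. \<forall>y\<in>Y. \<forall>z\<in>Y. u y z \<ge> min (u y x) (u x z)) \<and>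
     (\<forall>y\<in>Y. \<forall>z\<in>Y. u y z = u z y)"

definition closed_ball :: "'a set \<Rightarrow> ('a \<Rightarrow> 'a \<Rightarrow> 'g::linorder) \<Rightarrow> 'g \<Rightarrow> 'a \<Rightarrow> 'a set" where
  "closed_ball Y u \<alpha> y = {z \<in> Y. u y z \<ge> \<alpha>}"

definition is_closed_ball :: "'a set \<Rightarrow> ('a \<Rightarrow> 'a \<Rightarrow> 'g::linorder) \<Rightarrow> 'a set \<Rightarrow> bool" where
  "is_closed_ball Y u B \<longleftrightarrow> (\<exists>y\<in>Y. \<exists>\<alpha>\<in>Gamma Y u. B = closed_ball Y u \<alpha> y)"

definition is_ball :: "'a set \<Rightarrow> ('a \<Rightarrow> 'a \<Rightarrow> 'g::linorder) \<Rightarrow> 'a set \<Rightarrow> bool" where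
  "is_ball Y u B \<longleftrightarrow> (\<exists>C. C \<noteq> {} \<and> (\<forall>b\<in>C. is_closed_ball Y u b) \<and>
                         (\<exists>x. \<forall>b\<in>C. x \<in> b) \<and> B = \<Union>C)"

definition nest_of_balls :: "'a set \<Rightarrow> ('a \<Rightarrow> 'a \<Rightarrow> 'g::linorder) \<Rightarrow> 'a set set \<Rightarrow> bool" where
  "nest_of_balls Y u N \<longleftrightarrow> (\<forall>B\<in>N. is_ball Y u B) \<and> (\<forall>A\<in>N. \<forall>B\<in>N. A \<subseteq> B \<or> B \<subseteq> A)"

definition spherically_complete :: "'a set \<Rightarrow> ('a \<Rightarrow> 'a \<Rightarrow> 'g::linorder) \<Rightarrow> bool" where
  "spherically_complete Y u \<longleftrightarrow> (\<forall>N. N \<noteq> {} \<and> nest_of_balls Y u N \<longrightarrow> \<Inter>N \<noteq> {})"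

definition ball2 :: "'a set \<Rightarrow> ('a \<Rightarrow> 'a \<Rightarrow> 'g::linorder) \<Rightarrow> 'a \<Rightarrow> 'a \<Rightarrow> 'a set" where
  "ball2 Y u x y = closed_ball Y u (u x y) x"

definition attractor ::
  "'a set \<Rightarrow> ('a \<Rightarrow> 'a \<Rightarrow> 'g::linorder) \<Rightarrow> 'b set \<Rightarrow> ('b \<Rightarrow> 'b \<Rightarrow> 'h::linorder)
     \<Rightarrow> ('a \<Rightarrow> 'b) \<Rightarrow> 'b \<Rightarrow> bool" where
  "attractor Y u Y' u' f z' \<longleftrightarrow>
     (\<forall>y\<in>Y. z' \<noteq> f y \<longrightarrow>
        (\<exists>z\<in>Y. u' (f z) z' > u' (f y) z' \<and> f ` ball2 Y u y z \<subseteq> ball2 Y' u' (f y) z'))"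

definition immediate ::
  "'a set \<Rightarrow> ('a \<Rightarrow> 'a \<Rightarrow> 'g::linorder) \<Rightarrow> 'b set \<Rightarrow> ('b \<Rightarrow> 'b \<Rightarrow> 'h::linorder)
     \<Rightarrow> ('a \<Rightarrow> 'b) \<Rightarrow> bool" where
  "immediate Y u Y' u' f \<longleftrightarrow> f ` Y \<subseteq> Y' \<and> (\<forall>z'\<in>Y'. attractor Y u Y' u' f z')"

end

theory Submission
  imports Defs
begin

lemma zorn_pw:
  assumes "Q p0" "R p0 p0"
  shows "\<exists>M. p0 \<in> M \<and> (\<forall>p\<in>M. Q p) \<and> (\<forall>p\<in>M. \<forall>q\<in>M. R p q) \<and>
             (\<forall>p. Q p \<and> R p p \<and> (\<forall>q\<in>M. R p q \<and> R q p) \<longrightarrow> p \<in> M)"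
proof -
  define A where "A = {N. p0 \<in> N \<and> (\<forall>p\<in>N. Q p) \<and> (\<forall>p\<in>N. \<forall>q\<in>N. R p q)}"
  have "\<forall>C\<in>chains A. \<exists>U\<in>A. \<forall>X\<in>C. X \<subseteq> U"
  proof
    fix C assume C: "C \<in> chains A"
    hence CA: "C \<subseteq> A" and ch: "\<And>X Z. X \<in> C \<Longrightarrow> Z \<in> C \<Longrightarrow> X \<subseteq> Z \<or> Z \<subseteq> X"
      by (auto simp: chains_def chain_subset_def)
    show "\<exists>U\<in>A. \<forall>X\<in>C. X \<subseteq> U"
    proof (cases "C = {}")
      case True then show ?thesis using assms by (auto simp: A_def intro!: bexI[of _ "{p0}"])
    next
      case False
      have "\<Union>C \<in> A" unfolding A_def
      proof (intro CollectI conjI ballI)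
        show "p0 \<in> \<Union>C" using False CA by (auto simp: A_def)
        fix p assume "p \<in> \<Union>C" then show "Q p" using CA by (auto simp: A_def)
      next
        fix p q assume "p \<in> \<Union>C" "q \<in> \<Union>C"
        then obtain X Z where XZ: "X \<in> C" "Z \<in> C" "p \<in> X" "q \<in> Z" by auto
        show "R p q"
        proof (cases "X \<subseteq> Z")
          case True
          with XZ CA show ?thesis by (auto simp: A_def)
        next
          case False
          hence "Z \<subseteq> X" using ch XZ by blast
          moreover have "\<forall>p\<in>X. \<forall>q\<in>X. R p q" using XZ CA by (auto simp: A_def)
          ultimately show ?thesis using XZ by blast
        qed
      qed
      then show ?thesis by auto
    qed
  qed
  from Zorn_Lemma2[OF this] obtain M where M: "M \<in> A" "\<forall>X\<in>A. M \<subseteq> X \<longrightarrow> X = M" by blast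
  show ?thesis
  proof (intro exI[of _ M] conjI allI impI)
    show "p0 \<in> M" "\<forall>p\<in>M. Q p" "\<forall>p\<in>M. \<forall>q\<in>M. R p q" using M(1) by (auto simp: A_def)
    fix p assume p: "Q p \<and> R p p \<and> (\<forall>q\<in>M. R p q \<and> R q p)"
    have "insert p M \<in> A" using M(1) p by (auto simp: A_def)
    then have "insert p M = M" using M(2) by blast
    then show "p \<in> M" by blast
  qed
qed

context
  fixes Y :: "'a set" and u :: "'a \<Rightarrow> 'a \<Rightarrow> 'g::{linorder,order_top}"
  assumes um: "ultrametric Y u"
begin

lemma um_top: "y \<in> Y \<Longrightarrow> u y y = top"
  using um by (auto simp: ultrametric_def)

lemma um_sym: "a \<in> Y \<Longrightarrow> b \<in> Y \<Longrightarrow> u a b = u b a"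
  using um by (auto simp: ultrametric_def)

lemma um_tri: "a \<in> Y \<Longrightarrow> b \<in> Y \<Longrightarrow> c \<in> Y \<Longrightarrow> \<beta> \<le> u a c \<Longrightarrow> \<beta> \<le> u c b \<Longrightarrow> \<beta> \<le> u a b"
proof -
  assume "a \<in> Y" "b \<in> Y" "c \<in> Y" "\<beta> \<le> u a c" "\<beta> \<le> u c b"
  moreover have "u a b \<ge> min (u a c) (u c b)" using um \<open>a \<in> Y\<close> \<open>b \<in> Y\<close> \<open>c \<in> Y\<close>
    by (auto simp: ultrametric_def)
  ultimately show ?thesis by (simp add: min_def split: if_splits)
qed

lemma cb_sub: "closed_ball Y u \<alpha> y \<subseteq> Y"
  by (auto simp: closed_ball_def)

lemma center_in: "y \<in> Y \<Longrightarrow> y \<in> closed_ball Y u \<alpha> y"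
  by (auto simp: closed_ball_def um_top)

lemma top_Gamma: "y \<in> Y \<Longrightarrow> top \<in> Gamma Y u"
  unfolding Gamma_def using um_top by force

lemma u_Gamma: "a \<in> Y \<Longrightarrow> b \<in> Y \<Longrightarrow> u a b \<in> Gamma Y u"
  unfolding Gamma_def by blast

lemma cb_nest:
  assumes "p \<in> closed_ball Y u \<beta>1 c1" "p \<in> closed_ball Y u \<beta>2 c2" "c1 \<in> Y" "c2 \<in> Y" "\<beta>1 \<le> \<beta>2"
  shows "closed_ball Y u \<beta>2 c2 \<subseteq> closed_ball Y u \<beta>1 c1"
proof
  fix v assume v: "v \<in> closed_ball Y u \<beta>2 c2"
  have pY: "p \<in> Y" and vY: "v \<in> Y" using assms(1) v by (auto simp: closed_ball_def)
  have "\<beta>2 \<le> u p v"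
    using um_tri[OF pY vY assms(4), of \<beta>2] assms(2) v um_sym[OF pY assms(4)]
    by (auto simp: closed_ball_def)
  hence "\<beta>1 \<le> u p v" using assms(5) by simp
  hence "\<beta>1 \<le> u c1 v" using um_tri[OF assms(3) vY pY, of \<beta>1] assms(1) by (auto simp: closed_ball_def)
  thus "v \<in> closed_ball Y u \<beta>1 c1" using vY by (auto simp: closed_ball_def)
qed

lemma cb_nested:
  assumes "p \<in> closed_ball Y u \<beta>1 c1" "p \<in> closed_ball Y u \<beta>2 c2" "c1 \<in> Y" "c2 \<in> Y"
  shows "closed_ball Y u \<beta>2 c2 \<subseteq> closed_ball Y u \<beta>1 c1 \<or> closed_ball Y u \<beta>1 c1 \<subseteq> closed_ball Y u \<beta>2 c2"
  using cb_nest[OF assms] cb_nest[OF assms(2,1,4,3)] by (cases "\<beta>1 \<le> \<beta>2") auto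

lemma recenter:
  assumes "p \<in> closed_ball Y u \<alpha> c" "c \<in> Y"
  shows "closed_ball Y u \<alpha> p = closed_ball Y u \<alpha> c"
proof -
  have pY: "p \<in> Y" using assms by (auto simp: closed_ball_def)
  show ?thesis using cb_nest[OF assms(1) center_in[OF pY] assms(2) pY]
      cb_nest[OF center_in[OF pY] assms(1) pY assms(2)] by auto
qed

lemma two_in:
  assumes "a \<in> closed_ball Y u \<beta> c" "b \<in> closed_ball Y u \<beta> c" "c \<in> Y"
  shows "ball2 Y u a b \<subseteq> closed_ball Y u \<beta> c"
proof
  fix v assume v: "v \<in> ball2 Y u a b"
  have aY: "a \<in> Y" and bY: "b \<in> Y" and vY: "v \<in> Y" using assms v
    by (auto simp: closed_ball_def ball2_def)
  have "\<beta> \<le> u a b" using um_tri[OF aY bY assms(3)] assms um_sym[OF aY assms(3)]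
    by (auto simp: closed_ball_def)
  hence "\<beta> \<le> u a v" using v by (auto simp: ball2_def closed_ball_def)
  hence "\<beta> \<le> u c v" using um_tri[OF assms(3) vY aY] assms(1) by (auto simp: closed_ball_def)
  thus "v \<in> closed_ball Y u \<beta> c" using vY by (auto simp: closed_ball_def)
qed

lemma ball_sub: "is_ball Y u B \<Longrightarrow> B \<subseteq> Y"
  by (auto simp: is_ball_def is_closed_ball_def closed_ball_def)

lemma ball_ne: "is_ball Y u B \<Longrightarrow> B \<noteq> {}"
  by (auto simp: is_ball_def)

lemma ball_two:
  assumes B: "is_ball Y u B" and ab: "a \<in> B" "b \<in> B"
  shows "ball2 Y u a b \<subseteq> B"
proof -
  obtain C x where C: "C \<noteq> {}" "\<forall>b\<in>C. is_closed_ball Y u b" "\<forall>b\<in>C. x \<in> b" "B = \<Union>C"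
    using B by (auto simp: is_ball_def)
  obtain D1 D2 where D: "D1 \<in> C" "D2 \<in> C" "a \<in> D1" "b \<in> D2" using ab C(4) by auto
  obtain c1 \<beta>1 where 1: "c1 \<in> Y" "D1 = closed_ball Y u \<beta>1 c1" using C(2) D(1) by (auto simp: is_closed_ball_def)
  obtain c2 \<beta>2 where 2: "c2 \<in> Y" "D2 = closed_ball Y u \<beta>2 c2" using C(2) D(2) by (auto simp: is_closed_ball_def)
  have x: "x \<in> D1" "x \<in> D2" using C(3) D by auto
  show ?thesis
  proof (cases "\<beta>1 \<le> \<beta>2")
    case True
    hence "D2 \<subseteq> D1" using cb_nest[of x \<beta>1 c1 \<beta>2 c2] x 1 2 by auto
    hence "ball2 Y u a b \<subseteq> D1" using two_in[of a \<beta>1 c1 b] D 1 by auto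
    thus ?thesis using D C(4) by auto
  next
    case False
    hence "D1 \<subseteq> D2" using cb_nest[of x \<beta>2 c2 \<beta>1 c1] x 1 2 by auto
    hence "ball2 Y u a b \<subseteq> D2" using two_in[of a \<beta>2 c2 b] D 2 by auto
    thus ?thesis using D C(4) by auto
  qed
qed

lemma is_ball_cb: "y \<in> Y \<Longrightarrow> \<alpha> \<in> Gamma Y u \<Longrightarrow> is_ball Y u (closed_ball Y u \<alpha> y)"
  unfolding is_ball_def is_closed_ball_def
  by (rule exI[of _ "{closed_ball Y u \<alpha> y}"]) (auto intro: center_in)

definition L :: "('a \<Rightarrow> 'b) \<Rightarrow> 'a \<Rightarrow> 'b set \<Rightarrow> 'a set" where
  "L f y B' = {v \<in> Y. \<exists>\<alpha>\<in>Gamma Y u. v \<in> closed_ball Y u \<alpha> y \<and> f ` closed_ball Y u \<alpha> y \<subseteq> B'}"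

lemma L_subY: "L f y B' \<subseteq> Y"
  by (auto simp: L_def)

lemma L_img: "f ` L f y B' \<subseteq> B'"
  by (auto simp: L_def)

lemma L_in: "y \<in> Y \<Longrightarrow> f y \<in> B' \<Longrightarrow> y \<in> L f y B'"
proof -
  assume y: "y \<in> Y" "f y \<in> B'"
  have "closed_ball Y u top y = {y}" using y um by (auto simp: closed_ball_def ultrametric_def top_unique)
  thus ?thesis using y top_Gamma[OF y(1)] unfolding L_def by force
qed

lemma L_ball: "y \<in> Y \<Longrightarrow> f y \<in> B' \<Longrightarrow> is_ball Y u (L f y B')"
proof -
  assume y: "y \<in> Y" "f y \<in> B'"
  define C where "C = {closed_ball Y u \<alpha> y | \<alpha>. \<alpha> \<in> Gamma Y u \<and> f ` closed_ball Y u \<alpha> y \<subseteq> B'}"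
  have "closed_ball Y u top y = {y}" using y um by (auto simp: closed_ball_def ultrametric_def top_unique)
  hence "C \<noteq> {}" using y top_Gamma[OF y(1)] unfolding C_def by force
  moreover have "\<forall>b\<in>C. is_closed_ball Y u b" using y by (auto simp: C_def is_closed_ball_def)
  moreover have "\<forall>b\<in>C. y \<in> b" using y by (auto simp: C_def center_in)
  moreover have "L f y B' = \<Union>C" by (auto simp: C_def L_def closed_ball_def)
  ultimately show ?thesis unfolding is_ball_def by blast
qed

lemma cb_L: "y \<in> Y \<Longrightarrow> \<alpha> \<in> Gamma Y u \<Longrightarrow> f ` closed_ball Y u \<alpha> y \<subseteq> B' \<Longrightarrow> closed_ball Y u \<alpha> y \<subseteq> L f y B'"
  by (auto simp: L_def closed_ball_def)

lemma Lsub: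
  assumes y: "y \<in> Y" and y1: "y1 \<in> L f y B''" and BB: "B' \<subseteq> B''"
  shows "L f y1 B' \<subseteq> L f y B''"
proof
  fix v assume "v \<in> L f y1 B'"
  then obtain \<alpha> where a: "\<alpha> \<in> Gamma Y u" "v \<in> closed_ball Y u \<alpha> y1" "f ` closed_ball Y u \<alpha> y1 \<subseteq> B'"
    by (auto simp: L_def)
  obtain \<beta> where b: "\<beta> \<in> Gamma Y u" "y1 \<in> closed_ball Y u \<beta> y" "f ` closed_ball Y u \<beta> y \<subseteq> B''"
    using y1 by (auto simp: L_def)
  have y1Y: "y1 \<in> Y" using b by (auto simp: closed_ball_def)
  show "v \<in> L f y B''"
  proof (cases "\<beta> \<le> \<alpha>")
    case True
    hence "closed_ball Y u \<alpha> y1 \<subseteq> closed_ball Y u \<beta> y"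
      using cb_nest[OF b(2) center_in[OF y1Y] y y1Y] by auto
    thus ?thesis using a b cb_L[OF y b(1,3)] by auto
  next
    case False
    hence "closed_ball Y u \<beta> y \<subseteq> closed_ball Y u \<alpha> y1"
      using cb_nest[OF center_in[OF y1Y] b(2) y1Y y] by auto
    hence "y \<in> closed_ball Y u \<alpha> y1" using center_in[OF y] by auto
    hence e: "closed_ball Y u \<alpha> y = closed_ball Y u \<alpha> y1" using recenter y1Y by auto
    show ?thesis using cb_L[OF y a(1), of f B''] a BB e by auto
  qed
qed

end


lemma core:
  fixes Y :: "'a set" and u :: "'a \<Rightarrow> 'a \<Rightarrow> 'g::{linorder,order_top}"
    and Y' :: "'b set" and u' :: "'b \<Rightarrow> 'b \<Rightarrow> 'h::{linorder,order_top}"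
    and f :: "'a \<Rightarrow> 'b"
  assumes um: "ultrametric Y u" and um': "ultrametric Y' u'"
    and imm: "immediate Y u Y' u' f" and sc: "spherically_complete Y u"
    and z: "z' \<in> Y'"
    and p0: "y0 \<in> Y" "w0 \<in> Y" "u' (f w0) z' > u' (f y0) z'"
            "f ` ball2 Y u y0 w0 \<subseteq> ball2 Y' u' (f y0) z'"
  shows "\<exists>x \<in> ball2 Y u y0 w0. f x = z'"
proof -
  define \<gamma> where "\<gamma> = (\<lambda>v. u' (f v) z')"
  define bl where "bl = (\<lambda>p. ball2 Y u (fst p) (snd p))"
  define Q where "Q = (\<lambda>p. fst p \<in> Y \<and> snd p \<in> Y \<and> \<gamma> (fst p) < \<gamma> (snd p) \<and>
                           f ` bl p \<subseteq> ball2 Y' u' (f (fst p)) z')"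
  define R where "R = (\<lambda>p q. (bl p \<subseteq> bl q \<or> bl q \<subseteq> bl p) \<and> (bl p \<subset> bl q \<longrightarrow> \<gamma> (fst q) < \<gamma> (fst p)))"
  have fY: "\<And>v. v \<in> Y \<Longrightarrow> f v \<in> Y'" using imm by (auto simp: immediate_def)
  have attr: "\<And>a. a \<in> Y \<Longrightarrow> f a \<noteq> z' \<Longrightarrow> \<exists>b. Q (a,b)"
  proof -
    fix a assume a: "a \<in> Y" "f a \<noteq> z'"
    have "attractor Y u Y' u' f z'" using imm z by (auto simp: immediate_def)
    then obtain b where "b \<in> Y" "u' (f b) z' > u' (f a) z'" "f ` ball2 Y u a b \<subseteq> ball2 Y' u' (f a) z'"
      using a unfolding attractor_def by metis
    thus "\<exists>b. Q (a,b)" using a by (auto simp: Q_def \<gamma>_def bl_def)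
  qed
  have blY: "\<And>p. bl p \<subseteq> Y" by (auto simp: bl_def ball2_def closed_ball_def)
  have F1: "\<And>p v. Q p \<Longrightarrow> v \<in> bl p \<Longrightarrow> \<gamma> (fst p) \<le> \<gamma> v"
  proof -
    fix p v assume p: "Q p" and v: "v \<in> bl p"
    have vY: "v \<in> Y" using v blY[of p] by blast
    have yY: "fst p \<in> Y" using p by (auto simp: Q_def)
    have "f v \<in> ball2 Y' u' (f (fst p)) z'" using p v by (auto simp: Q_def)
    hence 1: "u' (f (fst p)) z' \<le> u' (f (fst p)) (f v)" by (auto simp: ball2_def closed_ball_def)
    show "\<gamma> (fst p) \<le> \<gamma> v" unfolding \<gamma>_def
      using um_tri[OF um' fY[OF vY] z fY[OF yY], of "u' (f (fst p)) z'"] 1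
        um_sym[OF um' fY[OF vY] fY[OF yY]] by auto
  qed
  have F2: "\<And>p. Q p \<Longrightarrow> fst p \<in> bl p \<and> snd p \<in> bl p"
    by (auto simp: Q_def bl_def ball2_def closed_ball_def um_top[OF um])
  have F3: "\<And>p q v. Q p \<Longrightarrow> Q q \<Longrightarrow> v \<in> bl p \<Longrightarrow> v \<in> bl q \<Longrightarrow> bl p \<subseteq> bl q \<or> bl q \<subseteq> bl p"
    unfolding bl_def ball2_def using cb_nested[OF um] by (metis Q_def)
  have Rself: "\<And>p. R p p" by (auto simp: R_def)
  have Q0: "Q (y0,w0)" using p0 by (auto simp: Q_def \<gamma>_def bl_def)
  obtain M where M: "(y0,w0) \<in> M" "\<forall>p\<in>M. Q p" "\<forall>p\<in>M. \<forall>q\<in>M. R p q"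
    "\<forall>p. Q p \<and> R p p \<and> (\<forall>q\<in>M. R p q \<and> R q p) \<longrightarrow> p \<in> M"
    using zorn_pw[of Q "(y0,w0)" R, OF Q0 Rself] by blast
  have "nest_of_balls Y u (bl ` M)"
    unfolding nest_of_balls_def
  proof (intro conjI ballI)
    fix B assume "B \<in> bl ` M"
    then obtain p where p: "p \<in> M" "B = bl p" by auto
    have "Q p" using p M(2) by auto
    thus "is_ball Y u B" using p is_ball_cb[OF um] u_Gamma[OF um]
      by (auto simp: Q_def bl_def ball2_def)
  next
    fix A B assume "A \<in> bl ` M" "B \<in> bl ` M"
    thus "A \<subseteq> B \<or> B \<subseteq> A" using M(3) by (auto simp: R_def)
  qed
  moreover have "bl ` M \<noteq> {}" using M(1) by auto
  ultimately obtain x where x: "x \<in> \<Inter>(bl ` M)" using sc unfolding spherically_complete_def by (metis equals0I)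
  have gx: "\<forall>q\<in>M. \<gamma> (fst q) \<le> \<gamma> x" using x F1 M(2) by auto
  have "\<exists>a \<in> \<Inter>(bl ` M). \<forall>q\<in>M. \<gamma> (fst q) < \<gamma> a"
  proof (cases "\<forall>q\<in>M. \<gamma> (fst q) < \<gamma> x")
    case True thus ?thesis using x by blast
  next
    case False
    then obtain q where q: "q \<in> M" "\<not> \<gamma> (fst q) < \<gamma> x" by blast
    hence eq: "\<gamma> (fst q) = \<gamma> x" using gx by force
    have Qq: "Q q" using q M(2) by auto
    have lt: "\<forall>q'\<in>M. \<gamma> (fst q') < \<gamma> (snd q)" using gx eq Qq by (force simp: Q_def)
    have "snd q \<in> \<Inter>(bl ` M)"
    proof (rule InterI)
      fix B assume "B \<in> bl ` M"
      then obtain q' where q': "q' \<in> M" "B = bl q'" by auto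
      have Rqq: "R q q'" "R q' q" using M(3) q q' by auto
      show "snd q \<in> B"
      proof (cases "bl q \<subseteq> bl q'")
        case True thus ?thesis using F2[OF Qq] q' by auto
      next
        case False
        hence "bl q' \<subset> bl q" using Rqq by (auto simp: R_def)
        hence "\<gamma> (fst q) < \<gamma> (fst q')" using Rqq by (auto simp: R_def)
        thus ?thesis using gx q' eq by force
      qed
    qed
    thus ?thesis using lt by blast
  qed
  then obtain a where a: "a \<in> \<Inter>(bl ` M)" "\<forall>q\<in>M. \<gamma> (fst q) < \<gamma> a" by blast
  show ?thesis
  proof (rule ccontr)
    assume nz: "\<not> ?thesis"
    have abl: "a \<in> ball2 Y u y0 w0" using a M(1) by (auto simp: bl_def)
    hence aY: "a \<in> Y" by (auto simp: ball2_def closed_ball_def)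
    have "f a \<noteq> z'" using nz abl by auto
    then obtain b where Qab: "Q (a,b)" using attr aY by blast
    have "\<forall>q\<in>M. R (a,b) q \<and> R q (a,b)"
    proof
      fix q assume q: "q \<in> M"
      have Qq: "Q q" using q M(2) by auto
      have ain: "a \<in> bl q" using a q by auto
      have nest: "bl (a,b) \<subseteq> bl q \<or> bl q \<subseteq> bl (a,b)"
        using F3[OF Qab Qq _ ain] F2[OF Qab] by auto
      have "\<not> bl q \<subset> bl (a,b)"
      proof
        assume "bl q \<subset> bl (a,b)"
        hence "fst q \<in> bl (a,b)" using F2[OF Qq] by auto
        hence "\<gamma> a \<le> \<gamma> (fst q)" using F1[OF Qab] by auto
        thus False using a q by force
      qed
      thus "R (a,b) q \<and> R q (a,b)" using nest a q by (auto simp: R_def)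
    qed
    hence "(a,b) \<in> M" using M(4) Qab Rself by blast
    thus False using a by force
  qed
qed


theorem theorem2:
  fixes Y :: "'a set" and u :: "'a \<Rightarrow> 'a \<Rightarrow> 'g::{linorder,order_top}"
    and Y' :: "'b set" and u' :: "'b \<Rightarrow> 'b \<Rightarrow> 'h::{linorder,order_top}"
    and f :: "'a \<Rightarrow> 'b"
  assumes "Y \<noteq> {}" and "Y' \<noteq> {}"
    and "ultrametric Y u" and "ultrametric Y' u'"
    and "immediate Y u Y' u' f"
    and "spherically_complete Y u"
  shows "f ` Y = Y' \<and> spherically_complete Y' u' \<and>
         (\<forall>y\<in>Y. \<forall>B'. is_ball Y' u' B' \<and> f y \<in> B' \<longrightarrow>
             (\<exists>B. is_ball Y u B \<and> y \<in> B \<and> f ` B = B'))"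
proof -
  note Yne = assms(1) and um = assms(3) and um' = assms(4) and imm = assms(5) and sc = assms(6)
  have fY: "\<And>v. v \<in> Y \<Longrightarrow> f v \<in> Y'" using imm by (auto simp: immediate_def)
  have attr: "\<And>a z'. z' \<in> Y' \<Longrightarrow> a \<in> Y \<Longrightarrow> f a \<noteq> z' \<Longrightarrow>
      \<exists>b\<in>Y. u' (f b) z' > u' (f a) z' \<and> f ` ball2 Y u a b \<subseteq> ball2 Y' u' (f a) z'"
  proof -
    fix a z' assume h: "z' \<in> Y'" "a \<in> Y" "f a \<noteq> z'"
    have "attractor Y u Y' u' f z'" using imm h(1) unfolding immediate_def by blast
    thus "\<exists>b\<in>Y. u' (f b) z' > u' (f a) z' \<and> f ` ball2 Y u a b \<subseteq> ball2 Y' u' (f a) z'"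
      using h(2) \<open>f a \<noteq> z'\<close>[symmetric] unfolding attractor_def by blast
  qed
  have core': "\<And>a z'. z' \<in> Y' \<Longrightarrow> a \<in> Y \<Longrightarrow> f a \<noteq> z' \<Longrightarrow>
      \<exists>b\<in>Y. f ` ball2 Y u a b \<subseteq> ball2 Y' u' (f a) z' \<and> (\<exists>x\<in>ball2 Y u a b. f x = z')"
  proof -
    fix a z' assume h: "z' \<in> Y'" "a \<in> Y" "f a \<noteq> z'"
    obtain b where b: "b \<in> Y" "u' (f b) z' > u' (f a) z'" "f ` ball2 Y u a b \<subseteq> ball2 Y' u' (f a) z'"
      using attr[OF h] by blast
    show "\<exists>b\<in>Y. f ` ball2 Y u a b \<subseteq> ball2 Y' u' (f a) z' \<and> (\<exists>x\<in>ball2 Y u a b. f x = z')"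
    proof -
      have "\<exists>x\<in>ball2 Y u a b. f x = z'" by (rule core[OF um um' imm sc h(1) h(2) b(1) b(2) b(3)])
      with b(1,3) show ?thesis by blast
    qed
  qed
  have surj: "f ` Y = Y'"
  proof
    show "f ` Y \<subseteq> Y'" using fY by auto
    show "Y' \<subseteq> f ` Y"
    proof
      fix z' assume z: "z' \<in> Y'"
      obtain y0 where y0: "y0 \<in> Y" using Yne by auto
      show "z' \<in> f ` Y"
      proof (cases "f y0 = z'")
        case True thus ?thesis using y0 by auto
      next
        case False
        then obtain b x where "b \<in> Y" "x \<in> ball2 Y u y0 b" "f x = z'" using core'[OF z y0] by blast
        thus ?thesis by (auto simp: ball2_def closed_ball_def)
      qed
    qed
  qed
  have lift: "\<And>y B'. y \<in> Y \<Longrightarrow> is_ball Y' u' B' \<Longrightarrow> f y \<in> B' \<Longrightarrow> f ` L Y u f y B' = B'"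
  proof -
    fix y B' assume y: "y \<in> Y" and B: "is_ball Y' u' B'" and fy: "f y \<in> B'"
    show "f ` L Y u f y B' = B'"
    proof
      show "f ` L Y u f y B' \<subseteq> B'" by (rule L_img[OF um])
      show "B' \<subseteq> f ` L Y u f y B'"
      proof
        fix z' assume z: "z' \<in> B'"
        have zY: "z' \<in> Y'" using z ball_sub[OF um' B] by auto
        show "z' \<in> f ` L Y u f y B'"
        proof (cases "f y = z'")
          case True thus ?thesis using L_in[OF um y, of f B', OF fy] by auto
        next
          case False
          then obtain b x where b: "b \<in> Y" "f ` ball2 Y u y b \<subseteq> ball2 Y' u' (f y) z'"
            "x \<in> ball2 Y u y b" "f x = z'" using core'[OF zY y] by blast
          have "f ` ball2 Y u y b \<subseteq> B'" using b(2) ball_two[OF um' B fy z] by auto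
          hence "ball2 Y u y b \<subseteq> L Y u f y B'"
            using cb_L[OF um y u_Gamma[OF um y b(1)]] unfolding ball2_def by blast
          thus ?thesis using b by auto
        qed
      qed
    qed
  qed
  have part3: "\<forall>y\<in>Y. \<forall>B'. is_ball Y' u' B' \<and> f y \<in> B' \<longrightarrow>
             (\<exists>B. is_ball Y u B \<and> y \<in> B \<and> f ` B = B')"
  proof (intro ballI allI impI)
    fix y B' assume y: "y \<in> Y" and h: "is_ball Y' u' B' \<and> f y \<in> B'"
    show "\<exists>B. is_ball Y u B \<and> y \<in> B \<and> f ` B = B'"
      using L_ball[OF um y, where f=f and B'=B'] L_in[OF um y, where f=f and B'=B'] lift[OF y, of B'] h by blast
  qed
  have "spherically_complete Y' u'"
    unfolding spherically_complete_def
  proof (intro allI impI)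
    fix N' assume N': "N' \<noteq> {} \<and> nest_of_balls Y' u' N'"
    have Nb: "\<And>B. B \<in> N' \<Longrightarrow> is_ball Y' u' B" using N' by (auto simp: nest_of_balls_def)
    have Nn: "\<And>A B. A \<in> N' \<Longrightarrow> B \<in> N' \<Longrightarrow> A \<subseteq> B \<or> B \<subseteq> A" using N' by (auto simp: nest_of_balls_def)
    define Lp where "Lp = (\<lambda>p. L Y u f (snd p) (fst p))"
    define Q where "Q = (\<lambda>p. fst p \<in> N' \<and> snd p \<in> Y \<and> f (snd p) \<in> fst p)"
    define R where "R = (\<lambda>p q. fst p \<subseteq> fst q \<longrightarrow> Lp p \<subseteq> Lp q)"
    obtain B0 where B0: "B0 \<in> N'" using N' by auto
    obtain z0 where z0: "z0 \<in> B0" using ball_ne[OF um' Nb[OF B0]] by auto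
    have "z0 \<in> f ` Y" using z0 ball_sub[OF um' Nb[OF B0]] surj by auto
    then obtain y0 where y0: "y0 \<in> Y" "f y0 = z0" by auto
    have Q0: "Q (B0,y0)" using B0 y0 z0 by (auto simp: Q_def)
    have Rself: "\<And>p. R p p" by (auto simp: R_def)
    obtain M where M: "(B0,y0) \<in> M" "\<forall>p\<in>M. Q p" "\<forall>p\<in>M. \<forall>q\<in>M. R p q"
      "\<forall>p. Q p \<and> R p p \<and> (\<forall>q\<in>M. R p q \<and> R q p) \<longrightarrow> p \<in> M"
      using zorn_pw[of Q "(B0,y0)" R, OF Q0 Rself] by blast
    have "nest_of_balls Y u (Lp ` M)"
      unfolding nest_of_balls_def
    proof (intro conjI ballI)
      fix B assume "B \<in> Lp ` M"
      then obtain p where p: "p \<in> M" "B = Lp p" by auto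
      have "Q p" using p M(2) by auto
      thus "is_ball Y u B" using p L_ball[OF um] by (auto simp: Q_def Lp_def)
    next
      fix A B assume "A \<in> Lp ` M" "B \<in> Lp ` M"
      then obtain p q where pq: "p \<in> M" "q \<in> M" "A = Lp p" "B = Lp q" by auto
      have "fst p \<subseteq> fst q \<or> fst q \<subseteq> fst p" using Nn pq M(2) by (auto simp: Q_def)
      thus "A \<subseteq> B \<or> B \<subseteq> A" using M(3) pq by (auto simp: R_def)
    qed
    moreover have "Lp ` M \<noteq> {}" using M(1) by auto
    ultimately obtain x where x: "x \<in> \<Inter>(Lp ` M)" using sc unfolding spherically_complete_def by (metis equals0I)
    have "x \<in> Lp (B0,y0)" using x M(1) by blast
    hence xY: "x \<in> Y" using L_subY[OF um] unfolding Lp_def by auto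
    have "f x \<in> \<Inter>N'"
    proof (rule InterI)
      fix B' assume B': "B' \<in> N'"
      show "f x \<in> B'"
      proof (cases "\<exists>q\<in>M. fst q \<subseteq> B'")
        case True
        then obtain q where q: "q \<in> M" "fst q \<subseteq> B'" by blast
        have "f x \<in> fst q" using x q L_img[OF um, of f "snd q" "fst q"] by (auto simp: Lp_def)
        thus ?thesis using q by auto
      next
        case False
        hence sup: "\<forall>q\<in>M. B' \<subseteq> fst q" using Nn B' M(2) by (auto simp: Q_def)
        show ?thesis
        proof (rule ccontr)
          assume nB: "f x \<notin> B'"
          obtain z' where z: "z' \<in> B'" using ball_ne[OF um' Nb[OF B']] by auto
          have zY: "z' \<in> Y'" using z ball_sub[OF um' Nb[OF B']] by auto
          have "f x \<noteq> z'" using nB z by auto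
          then obtain b y1 where b: "b \<in> Y" "f ` ball2 Y u x b \<subseteq> ball2 Y' u' (f x) z'"
            "y1 \<in> ball2 Y u x b" "f y1 = z'" using core'[OF zY xY] by blast
          have y1Y: "y1 \<in> Y" using b(3) by (auto simp: ball2_def closed_ball_def)
          have Qp: "Q (B',y1)" using B' y1Y b(4) z by (auto simp: Q_def)
          have "\<forall>q\<in>M. R (B',y1) q \<and> R q (B',y1)"
          proof
            fix q assume q: "q \<in> M"
            have Qq: "Q q" using q M(2) by auto
            have xq: "x \<in> Lp q" using x q by auto
            have fxq: "f x \<in> fst q" using xq L_img[OF um, of f "snd q" "fst q"] by (auto simp: Lp_def)
            have "f ` ball2 Y u x b \<subseteq> fst q"
            proof -
              have "fst q \<in> N'" using Qq by (simp add: Q_def)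
              moreover have "z' \<in> fst q" using z sup q by blast
              ultimately show ?thesis using b(2) ball_two[OF um' Nb[of "fst q"] fxq, of z'] by blast
            qed
            hence "ball2 Y u x b \<subseteq> L Y u f x (fst q)"
              using cb_L[OF um xY u_Gamma[OF um xY b(1)]] unfolding ball2_def by blast
            also have "\<dots> \<subseteq> Lp q" using Lsub[OF um _ xq[unfolded Lp_def], of "fst q"] Qq
              unfolding Q_def Lp_def by blast
            finally have "y1 \<in> Lp q" using b(3) by auto
            moreover have "snd q \<in> Y" using Qq by (simp add: Q_def)
            ultimately have "L Y u f y1 B' \<subseteq> Lp q" using Lsub[OF um, of "snd q" y1 f "fst q" B'] sup q
              unfolding Lp_def by blast
            moreover have "\<not> fst q \<subseteq> B'" using False q by blast
            ultimately show "R (B',y1) q \<and> R q (B',y1)" by (auto simp: R_def Lp_def)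
          qed
          hence "(B',y1) \<in> M" using M(4) Qp Rself by blast
          thus False using False by auto
        qed
      qed
    qed
    thus "\<Inter>N' \<noteq> {}" by auto
  qed
  thus ?thesis using surj part3 by blast
qed

end
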